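(* For every integer $k>20$, the $(2k+2)\times(2k+2)$ Toeplitz matrix $B_k$ whose first column is $(1,1,0,\dots,0)^T$ (with $2k$ trailing zeros) and whose first row is $(1,\underbrace{0,\dots,0}_{k},(-1)^k,(-1)^k,\underbrace{0,\dots,0}_{k-1})$ has an eigenvalue with negative real part. *)

theory Defs
  imports Complex_Main "Jordan_Normal_Form.Char_Poly"
begin

definition toeplitz :: "nat \<Rightarrow> (int \<Rightarrow> 'a) \<Rightarrow> 'a mat" where
  "toeplitz n t = mat n n (\<lambda>(i,j). t (int j - int i))"

text \<open>Symbol of B_k: first column (1,1,0,...,0), first row
  (1, 0 (k times), (-1)^k, (-1)^k, 0 (k-1 times)).\<close>
definition B_symbol :: "nat \<Rightarrow> int \<Rightarrow> complex" where
  "B_symbol k d = (if d = 0 then 1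
                   else if d = -1 then 1
                   else if d = int k + 1 \<or> d = int k + 2 then (-1) ^ k
                   else 0)"

definition B_mat :: "nat \<Rightarrow> complex mat" where
  "B_mat k = toeplitz (2 * k + 2) (B_symbol k)"

end

theory Submission
  imports Defs "HOL-Analysis.Analysis"
begin

lemma sym_eq:
  fixes k i j :: nat
  assumes "k \<ge> 1"
  shows "B_symbol k (int j - int i) = (if j = i then 1 else 0) + (if j + 1 = i then 1 else 0)
     + (-1)^k * ((if j = i+k+1 then 1 else 0) + (if j = i+k+2 then 1 else 0))"
proof (cases "j = i")
  case True then show ?thesis using assms by (simp add: B_symbol_def)
next
  case F1: False
  show ?thesis
  proof (cases "j + 1 = i")
    case True then show ?thesis using assms F1 by (simp add: B_symbol_def)
  next
    case F2: False
    show ?thesis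
    proof (cases "j = i+k+1")
      case True then show ?thesis using assms F1 F2 by (simp add: B_symbol_def)
    next
      case F3: False
      show ?thesis
      proof (cases "j = i+k+2")
        case True then show ?thesis using assms F1 F2 F3 by (simp add: B_symbol_def)
      next
        case F4: False
        have "int j - int i \<noteq> 0" "int j - int i \<noteq> -1" "int j - int i \<noteq> int k + 1" "int j - int i \<noteq> int k + 2"
          using F1 F2 F3 F4 by linarith+
        then show ?thesis using F1 F2 F3 F4 unfolding B_symbol_def by simp
      qed
    qed
  qed
qed

lemma row_sum:
  fixes k i :: nat and f :: "nat \<Rightarrow> complex"
  assumes "k \<ge> 1" "i < 2*k+2"
  shows "(\<Sum>j<2*k+2. B_symbol k (int j - int i) * f j) =
     (if 0 < i then f (i-1) else 0) + f i + (-1)^k * ((if i+k+1 < 2*k+2 then f (i+k+1) else 0)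
       + (if i+k+2 < 2*k+2 then f (i+k+2) else 0))"
proof -
  have e: "B_symbol k (int j - int i) * f j = (if j = i then f j else 0) + (if j = i - 1 \<and> 0 < i then f j else 0)
     + (-1)^k * ((if j = i+k+1 then f j else 0) + (if j = i+k+2 then f j else 0))" for j
    unfolding sym_eq[OF assms(1)] by (auto simp: algebra_simps)
  have d: "(\<Sum>j<N. if j = c then f j else 0) = (if c < N then f c else 0)" for c N
    by (simp add: sum.delta')
  have d2: "(\<Sum>j<2*k+2. if j = i - 1 \<and> 0 < i then f j else 0) = (if 0 < i then f (i-1) else 0)"
    using assms by (cases i) (simp_all add: sum.delta')
  show ?thesis unfolding e sum.distrib sum_distrib_left[symmetric] d d2
    using assms by simp
qed

definition wv :: "complex \<Rightarrow> nat \<Rightarrow> nat \<Rightarrow> complex" where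
  "wv z k i = (if i < k then of_nat (i+1) * (z-1) * z^(k-1-i) else z^(2*k+2-i))"

definition xv :: "complex \<Rightarrow> nat \<Rightarrow> nat \<Rightarrow> complex" where
  "xv z k i = (-1)^i * wv z k i"

lemma alg1: fixes s a X Y :: complex assumes h: "s * s = 1"
  shows "s * (- (a * s) * X + a * s * Y) = a * (Y - X)"
proof -
  have "s * (- (a * s) * X + a * s * Y) = (s * s) * a * (Y - X)" by (simp add: algebra_simps)
  then show ?thesis using h by simp
qed

lemma eig_row:
  fixes z :: complex
  assumes k: "k \<ge> 1" and root: "z^(k+3) = of_nat (k+1) * z - of_nat k" and i: "i < 2*k+2"
  shows "(if 0 < i then xv z k (i-1) else 0) + xv z k i + (-1)^k * ((if i+k+1 < 2*k+2 then xv z k (i+k+1) else 0)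
       + (if i+k+2 < 2*k+2 then xv z k (i+k+2) else 0)) = (1 - z) * xv z k i"
proof -
  have ss: "((-1::complex)^k) * (-1)^k = 1"
  proof -
    have "(-1::complex)^(k+k) = 1" by simp
    then show ?thesis by (simp add: power_add)
  qed
  consider "i < k" | "i = k" | "k < i" by linarith
  then show ?thesis
  proof cases
    case 1
    define d where "d = k - i - 1"
    have kd: "k = i + 1 + d" using 1 unfolding d_def by simp
    have w1: "wv z k (i+k+1) = z^(d+2)" "wv z k (i+k+2) = z^(d+1)" "wv z k i = of_nat (i+1) * (z-1) * z^d"
      unfolding wv_def kd by auto
    have sg: "(-1::complex)^(i+k+1) = - ((-1)^i * (-1)^k)" "(-1::complex)^(i+k+2) = ((-1)^i * (-1)^k)"
      by (simp_all add: power_add)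
    have r: "(-1)^k * (xv z k (i+k+1) + xv z k (i+k+2)) = (-1)^i * (z^(d+1) - z^(d+2))"
      unfolding xv_def w1 sg using alg1[OF ss] by simp
    have c1: "i+k+1 < 2*k+2" "i+k+2 < 2*k+2" using 1 by auto
    have zp: "z^(d+1) = z * z^d" "z^(d+2) = z * z * z^d" by simp_all
    show ?thesis
    proof (cases i)
      case 0
      have "(z-1) * z^d + (z * z^d - z * z * z^d) = (1 - z) * ((z-1) * z^d)"
        by (simp add: algebra_simps)
      moreover have "\<not> 0 < i" "(-1::complex)^i = 1" "of_nat (i+1) = (1::complex)" using 0 by simp_all
      ultimately show ?thesis using r c1 unfolding xv_def w1 zp by simp
    next
      case (Suc q)
      have w0: "wv z k q = of_nat (q+1) * (z-1) * z^(d+1)"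
        unfolding wv_def kd Suc by auto
      have sp: "(-1::complex)^i = - ((-1)^q)" unfolding Suc by simp
      have key: "(-1)^q * (of_nat (q+1) * (z-1) * (z * z^d)) + (- ((-1)^q)) * (of_nat (Suc q+1) * (z-1) * z^d)
         + (- ((-1)^q)) * (z * z^d - z * z * z^d) = (1 - z) * ((- ((-1)^q)) * (of_nat (Suc q+1) * (z-1) * z^d))"
        by (simp add: algebra_simps)
      have "0 < i" "i - 1 = q" "i + 1 = Suc q + 1" using Suc by simp_all
      then show ?thesis using r c1 key unfolding xv_def w1 zp sp by (simp add: w0 zp)
    qed
  next
    case 2
    have c: "0 < i" "i+k+1 < 2*k+2" "\<not> i+k+2 < 2*k+2" using 2 k by auto
    have w: "wv z k (i-1) = of_nat k * (z-1)" "wv z k i = z^(k+2)" "wv z k (i+k+1) = z"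
      unfolding wv_def 2 using k by auto
    have sg: "(-1::complex)^(i-1) = - ((-1)^k)" "(-1::complex)^(i+k+1) = -1" "(-1::complex)^i = (-1)^k"
    proof -
      have "(-1::complex)^k = (-1)^(Suc (k-1))" using k by simp
      then show "(-1::complex)^(i-1) = - ((-1)^k)" unfolding 2 by simp
      have "(-1::complex)^(k+k+1) = -1" by simp
      then show "(-1::complex)^(i+k+1) = -1" unfolding 2 .
      show "(-1::complex)^i = (-1)^k" unfolding 2 ..
    qed
    have e: "z^(k+3) = z * z^(k+2)" by (simp add: power_add power3_eq_cube power2_eq_square algebra_simps)
    have key: "- (of_nat k * (z-1)) + z^(k+2) - z = (1 - z) * z^(k+2)"
    proof -
      have "(1 - z) * z^(k+2) = z^(k+2) - z^(k+3)" unfolding e by (simp add: algebra_simps)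
      also have "\<dots> = z^(k+2) - (of_nat (k+1) * z - of_nat k)" using root by simp
      finally show ?thesis by (simp add: algebra_simps)
    qed
    have "(-1)^k * (- (of_nat k * (z-1)) + z^(k+2) - z) = (-1)^k * ((1 - z) * z^(k+2))"
      using key by simp
    then show ?thesis using c unfolding xv_def w sg by (simp add: algebra_simps)
  next
    case 3
    define e where "e = 2*k+1-i"
    have c: "0 < i" "\<not> i+k+1 < 2*k+2" "\<not> i+k+2 < 2*k+2" using 3 by auto
    have w: "wv z k (i-1) = z^(e+2)" "wv z k i = z^(e+1)"
    proof -
      have "2*k+2-(i-1) = e+2" "2*k+2-i = e+1" "\<not> i - 1 < k" "\<not> i < k" unfolding e_def using 3 i by auto
      then show "wv z k (i-1) = z^(e+2)" "wv z k i = z^(e+1)" unfolding wv_def by simp_all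
    qed
    have sg: "(-1::complex)^i = - ((-1)^(i-1))"
    proof -
      have "(-1::complex)^i = (-1)^(Suc (i-1))" using c by simp
      then show ?thesis by simp
    qed
    have "- (z^(e+2)) + z^(e+1) = (1 - z) * z^(e+1)" by (simp add: algebra_simps)
    then show ?thesis using c unfolding xv_def w sg by (simp add: algebra_simps)
  qed
qed


lemma eigen:
  fixes z :: complex
  assumes k: "k \<ge> 1" and root: "z^(k+3) = of_nat (k+1) * z - of_nat k" and z0: "z \<noteq> 0"
  shows "eigenvalue (B_mat k) (1 - z)"
proof -
  define n where "n = 2*k+2"
  define v where "v = Matrix.vec n (xv z k)"
  have dB: "dim_row (B_mat k) = n" "dim_col (B_mat k) = n"
    unfolding B_mat_def toeplitz_def n_def by simp_all
  have vc: "v \<in> carrier_vec n" unfolding v_def by simp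
  have vnz: "v \<noteq> 0\<^sub>v n"
  proof
    assume "v = 0\<^sub>v n"
    then have "v $ (2*k+1) = 0" unfolding n_def by simp
    moreover have "v $ (2*k+1) = - z" unfolding v_def n_def xv_def wv_def by simp
    ultimately show False using z0 by simp
  qed
  have mv: "B_mat k *\<^sub>v v = (1 - z) \<cdot>\<^sub>v v"
  proof (rule eq_vecI)
    show "dim_vec (B_mat k *\<^sub>v v) = dim_vec ((1 - z) \<cdot>\<^sub>v v)" using dB vc by simp
    fix i assume "i < dim_vec ((1 - z) \<cdot>\<^sub>v v)"
    then have i: "i < n" using vc by simp
    have "(B_mat k *\<^sub>v v) $ i = (\<Sum>j<2*k+2. B_symbol k (int j - int i) * xv z k j)"
      using i dB unfolding v_def n_def
      by (simp add: scalar_prod_def atLeast0LessThan B_mat_def toeplitz_def)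
    also have "\<dots> = (1 - z) * xv z k i"
      unfolding row_sum[OF k i[unfolded n_def]] using eig_row[OF k root i[unfolded n_def]] .
    also have "\<dots> = ((1 - z) \<cdot>\<^sub>v v) $ i" using i unfolding v_def by simp
    finally show "(B_mat k *\<^sub>v v) $ i = ((1 - z) \<cdot>\<^sub>v v) $ i" .
  qed
  show ?thesis unfolding eigenvalue_def eigenvector_def dB
    using vc vnz mv by blast
qed

lemma exp_16_le: "exp (1.6::real) \<le> 5.59"
proof -
  have a: "exp (-0.1::real) \<ge> 0.9" using exp_ge_add_one_self[of "-0.1::real"] by simp
  have b: "exp (0.1::real) * exp (-0.1) = 1" by (simp flip: exp_add)
  have c: "exp (0.1::real) \<le> 10/9"
  proof -
    have "exp (0.1::real) * 0.9 \<le> exp (0.1) * exp (-0.1)" using a by (intro mult_left_mono) auto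
    then show ?thesis using b by simp
  qed
  have "exp (1.6::real) = exp (0.1) ^ 16" using exp_of_nat_mult[of 16 "0.1::real"] by simp
  also have "\<dots> \<le> (10/9) ^ 16" by (intro power_mono c) simp
  also have "\<dots> \<le> 5.59" by (simp add: power_divide)
  finally show ?thesis .
qed

lemma exp_6_ge: "exp (6::real) \<ge> 20"
proof -
  have "exp (6::real) = exp 2 ^ 3" using exp_of_nat_mult[of 3 "2::real"] by simp
  moreover have "(3::real) ^ 3 \<le> exp 2 ^ 3" using exp_ge_add_one_self[of "2::real"] by (intro power_mono) auto
  ultimately show ?thesis by simp
qed

lemma cos_lower: "cos (x::real) \<ge> 1 - x^2/2"
proof -
  have "cos x = 1 - 2 * sin (x/2)^2" using cos_double_sin[of "x/2"] by simp
  moreover have "sin (x/2)^2 \<le> (x/2)^2"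
    using abs_sin_x_le_abs_x[of "x/2"] by (metis abs_ge_zero power2_abs power_mono)
  ultimately show ?thesis by (simp add: power_divide)
qed

lemma sin_lower: assumes "(x::real) \<ge> 0" shows "sin x \<ge> x - x^3/6"
proof -
  have "\<bar>sin x - (\<Sum>m<3. sin_coeff m * x ^ m)\<bar> \<le> inverse (fact 3) * \<bar>x\<bar> ^ 3"
    by (rule Maclaurin_sin_bound)
  moreover have "(\<Sum>m<3. sin_coeff m * x ^ m) = x"
    by (simp add: eval_nat_numeral sin_coeff_def)
  moreover have "inverse (fact 3 :: real) = 1/6" by (simp add: eval_nat_numeral)
  ultimately have "\<bar>sin x - x\<bar> \<le> \<bar>x\<bar>^3 / 6" by simp
  moreover have "\<bar>x\<bar>^3 = x^3" using assms by simp
  ultimately show ?thesis by linarith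
qed


lemma est:
  fixes M a t :: real
  assumes M: "M \<ge> 24" and a1: "1.6 \<le> a" and a2: "a \<le> 6" and t1: "6.283 \<le> t" and t2: "t \<le> 7.854"
  shows "1 + 0.2/M \<le> exp (a/M) * cos (t/M)" "exp (a/M) * cos (t/M) \<le> 1 + 8/M"
        "6.1/M \<le> exp (a/M) * sin (t/M)" "exp (a/M) * sin (t/M) \<le> 11/M"
proof -
  define u where "u = 1/M"
  have u0: "0 < u" and u1: "u \<le> 1/24" unfolding u_def using M by auto
  have aM: "a/M = a*u" "t/M = t*u" "0.2/M = 0.2*u" "8/M = 8*u" "6.1/M = 6.1*u" "11/M = 11*u"
    unfolding u_def by simp_all
  define r where "r = exp (a*u)"
  define p where "p = t*u"
  have p0: "0 \<le> p" unfolding p_def using u0 t1 by simp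
  have p1: "p \<le> 7.854/24" unfolding p_def using u0 u1 t1 t2 mult_mono[of t "7.854" u "1/24"] by simp
  have r1: "r \<ge> 1 + 1.6*u" unfolding r_def using exp_ge_add_one_self[of "a*u"] a1 u0
    by (smt (verit) mult_right_mono)
  have r2: "r \<le> 1 + 8*u"
  proof -
    have e1: "exp (-(a*u)) \<ge> 1 - a*u" using exp_ge_add_one_self[of "-(a*u)"] by simp
    have e2: "r * exp (-(a*u)) = 1" unfolding r_def by (simp flip: exp_add)
    have au: "a*u \<le> 6/24" using a2 u1 u0 a1 mult_mono[of a 6 u "1/24"] by simp
    have "r * (1 - a*u) \<le> 1" using e1 e2 r_def au
      by (metis exp_gt_zero mult_left_mono less_imp_le)
    moreover have "(1 + 8*u) * (1 - a*u) \<ge> 1"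
    proof -
      have "a * u * (1 + 8*u) \<le> 8*u"
      proof -
        have "a * (1 + 8*u) \<le> 6 * (1 + 8/24)" using a1 a2 u0 u1 by (intro mult_mono) auto
        then have "a * (1 + 8*u) * u \<le> 8 * u" using u0 by (simp add: mult_right_mono)
        then show ?thesis by (simp add: algebra_simps)
      qed
      then show ?thesis by (simp add: algebra_simps)
    qed
    moreover have "1 - a*u > 0" using au by simp
    ultimately have "r * (1 - a*u) \<le> (1 + 8*u) * (1 - a*u)" by linarith
    then show ?thesis using \<open>1 - a*u > 0\<close> by (rule mult_right_le_imp_le)
  qed
  have cp: "cos p \<ge> 1 - p^2/2" by (rule cos_lower)
  have cp0: "1 - p^2/2 \<ge> 0"
  proof -
    have "p^2 \<le> (7.854/24)^2" using p0 p1 by (intro power_mono) auto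
    moreover have "(7.854/24::real)^2 \<le> 2" by (simp add: power2_eq_square)
    ultimately show ?thesis by linarith
  qed
  have sp: "sin p \<ge> p - p^3/6" by (rule sin_lower[OF p0])
  have sp0: "sin p \<ge> 0" using p0 p1 pi_gt3 by (intro sin_ge_zero) auto
  have spu: "sin p \<le> p" by (rule sin_x_le_x[OF p0])
  have g1: "(1 + 1.6*u) * (1 - p^2/2) \<ge> 1 + 0.2*u"
  proof -
    have "t^2 \<le> 7.854^2" using t1 t2 by (intro power_mono) auto
    moreover have "(7.854::real)^2 \<le> 61.69" by (simp add: power2_eq_square)
    ultimately have tt: "t^2 \<le> 61.69" by linarith
    have "(1 + 1.6*u) * (t^2 * u) \<le> (1 + 1.6/24) * (61.69 * (1/24))"
      using u0 u1 tt by (intro mult_mono) auto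
    then have "(1 + 1.6*u) * (t^2 * u) \<le> 2.8" by simp
    then have "(1 + 1.6*u) * (t^2 * u) * u \<le> 2.8 * u" using u0 by (simp add: mult_right_mono)
    then show ?thesis unfolding p_def by (simp add: algebra_simps power2_eq_square)
  qed
  show "1 + 0.2/M \<le> exp (a/M) * cos (t/M)"
  proof -
    have "(1 + 1.6*u) * (1 - p^2/2) \<le> r * cos p" using r1 cp cp0 u0 by (intro mult_mono) auto
    then show ?thesis using g1 unfolding aM r_def p_def by simp
  qed
  show "exp (a/M) * cos (t/M) \<le> 1 + 8/M"
  proof -
    have "exp (a*u) * cos (t*u) \<le> exp (a*u)" using mult_left_mono[OF cos_le_one, of "exp (a*u)" "t*u"] by simp
    then show ?thesis using r2 unfolding aM r_def p_def by linarith
  qed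
  show "6.1/M \<le> exp (a/M) * sin (t/M)"
  proof -
    have "p - p^3/6 \<ge> 6.1 * u"
    proof -
      have "t^3 \<le> 7.854^3" using t1 t2 by (intro power_mono) auto
      have "t^3 * u^2 \<le> 7.854^3 * (1/24)^2"
        using \<open>t^3 \<le> 7.854^3\<close> u0 u1 t1 by (intro mult_mono power_mono) auto
      moreover have "(7.854::real)^3 * (1/24)^2 \<le> 0.9" by (simp add: power3_eq_cube power2_eq_square)
      ultimately have "t^3 * u^2 \<le> 0.9" by (rule order_trans)
      moreover have "0.9 \<le> 6 * (t - 6.1)" using t1 by simp
      ultimately have "t^3 * u^2 \<le> 6 * (t - 6.1)" by (rule order_trans)
      then have "t^3 * u^2 * u \<le> 6 * (t - 6.1) * u" using u0 by (simp add: mult_right_mono)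
      then show ?thesis unfolding p_def by (simp add: algebra_simps power3_eq_cube power2_eq_square)
    qed
    moreover have "sin p \<le> r * sin p" using r1 u0 sp0 mult_right_mono[of 1 r "sin p"] by simp
    ultimately show ?thesis using sp unfolding aM r_def p_def by simp
  qed
  show "exp (a/M) * sin (t/M) \<le> 11/M"
  proof -
    have "r * sin p \<le> (1 + 8*u) * p" using r2 spu sp0 u0 r1 by (intro mult_mono) auto
    moreover have "(1 + 8*u) * t \<le> 11"
    proof -
      have "(1 + 8*u) * t \<le> (1 + 8/24) * 7.854" using u0 u1 t1 t2 by (intro mult_mono) auto
      then show ?thesis by simp
    qed
    then have "(1 + 8*u) * t * u \<le> 11 * u" using u0 by (simp add: mult_right_mono)
    ultimately show ?thesis unfolding aM r_def p_def by (simp add: algebra_simps)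
  qed
qed


lemma root_exists:
  fixes k :: nat
  assumes k: "k \<ge> 21"
  shows "\<exists>z::complex. z^(k+3) = of_nat (k+1) * z - of_nat k \<and> Re z > 1"
proof -
  define M where "M = real k + 3"
  have M: "M \<ge> 24" unfolding M_def using k by simp
  have M0: "M > 0" using M by simp
  have nz0: "complex_of_nat (k+3) \<noteq> 0" by (simp only: of_nat_eq_0_iff)
  have nz: "complex_of_nat k + 3 \<noteq> 0" using nz0 by simp
  define G where "G z = of_nat (k+1) * z - of_nat k" for z :: complex
  define F where "F z = exp ((Ln (G z) + 2 * of_real pi * \<i>) / of_nat (k+3))" for z
  define S where "S = cbox (Complex (1 + 0.2/M) (6.1/M)) (Complex (1 + 8/M) (11/M))"
  have Smem: "z \<in> S \<longleftrightarrow> 1 + 0.2/M \<le> Re z \<and> Re z \<le> 1 + 8/M \<and> 6.1/M \<le> Im z \<and> Im z \<le> 11/M" for z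
    unfolding S_def cbox_complex_eq by auto
  have ReG: "Re (G z) = (real k + 1) * Re z - real k" "Im (G z) = (real k + 1) * Im z" for z
    unfolding G_def by simp_all
  have Gb: "1 \<le> Re (G z) \<and> Re (G z) \<le> 9 \<and> 5.59 \<le> Im (G z) \<and> Im (G z) \<le> 11" if z: "z \<in> S" for z
  proof -
    have z1: "1 \<le> Re z" "Re z \<le> 1 + 8/M" "6.1/M \<le> Im z" "Im z \<le> 11/M" using z Smem M0
      by (auto intro: order_trans[of 1 "1 + 0.2/M"])
    have "(real k + 1) * 1 \<le> (real k + 1) * Re z" using z1 by (intro mult_left_mono) auto
    then have r1: "1 \<le> Re (G z)" unfolding ReG by (smt (verit))
    have "(real k + 1) * Re z \<le> (real k + 1) * (1 + 8/M)" using z1 by (intro mult_left_mono) auto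
    also have "\<dots> = real k + 1 + 8 * ((real k + 1) / M)" by (simp add: algebra_simps)
    also have "\<dots> \<le> real k + 1 + 8 * 1" using M0 unfolding M_def by (simp add: field_simps)
    finally have r2: "Re (G z) \<le> 9" unfolding ReG by simp
    have "(real k + 1) * (6.1/M) \<le> (real k + 1) * Im z" using z1 by (intro mult_left_mono) auto
    moreover have "5.59 \<le> (real k + 1) * (6.1/M)"
    proof -
      have "5.59 * M \<le> (real k + 1) * 6.1" unfolding M_def using k by simp
      then show ?thesis using M0 by (simp add: field_simps)
    qed
    ultimately have "5.59 \<le> (real k + 1) * Im z" by (metis order_trans)
    then have r3: "5.59 \<le> Im (G z)" unfolding ReG .
    have "(real k + 1) * Im z \<le> (real k + 1) * (11/M)" using z1 by (intro mult_left_mono) auto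
    also have "\<dots> \<le> 11" using M0 unfolding M_def by (simp add: field_simps)
    finally have r4: "Im (G z) \<le> 11" unfolding ReG by simp
    show ?thesis using r1 r2 r3 r4 by simp
  qed
  have FS: "F z \<in> S" if z: "z \<in> S" for z
  proof -
    define w where "w = G z"
    have wb: "1 \<le> Re w" "Re w \<le> 9" "5.59 \<le> Im w" "Im w \<le> 11" using Gb[OF z] unfolding w_def by auto
    have w0: "w \<noteq> 0" using wb by auto
    define A where "A = cmod w"
    have "Im w \<le> cmod w" using order_trans[OF abs_ge_self abs_Im_le_cmod] .
    then have A1: "5.59 \<le> A" unfolding A_def using wb(3) by (rule order_trans[rotated])
    have "0 \<le> Im w" using wb(3) by simp
    then have "cmod w \<le> Re w + Im w" using cmod_le[of w] wb(1) by simp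
    then have A2: "A \<le> 20" using wb(2) wb(4) unfolding A_def by linarith
    have A0: "A > 0" using A1 by simp
    define a where "a = ln A"
    have "exp 1.6 \<le> A" using exp_16_le A1 by (rule order_trans)
    then have a1: "1.6 \<le> a" unfolding a_def using ln_ge_iff[OF A0] by blast
    have a2: "a \<le> 6"
    proof -
      have "ln A \<le> ln (exp 6)" using A0 A2 exp_6_ge by (subst ln_le_cancel_iff) auto
      then show ?thesis unfolding a_def by simp
    qed
    define th where "th = Im (Ln w)"
    have th1: "0 \<le> th" unfolding th_def using Im_Ln_pos_le[OF w0] wb by simp
    have th2: "th < pi/2" unfolding th_def using Re_Ln_pos_lt_imp[of w] wb by simp
    define t where "t = th + 2 * pi"
    have t1: "6.283 \<le> t" unfolding t_def using th1 pi_approx by simp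
    have t2: "t \<le> 7.854" unfolding t_def using th2 pi_approx by simp
    have ReF: "Re (F z) = exp (a/M) * cos (t/M)" "Im (F z) = exp (a/M) * sin (t/M)"
    proof -
      have X: "Re ((Ln (G z) + 2 * of_real pi * \<i>) / of_nat (k+3)) = a / M"
              "Im ((Ln (G z) + 2 * of_real pi * \<i>) / of_nat (k+3)) = t / M"
        unfolding a_def A_def t_def th_def w_def[symmetric] M_def using w0 by simp_all
      show "Re (F z) = exp (a/M) * cos (t/M)" "Im (F z) = exp (a/M) * sin (t/M)"
        unfolding F_def Re_exp Im_exp X by simp_all
    qed
    show ?thesis unfolding Smem ReF using est[OF M a1 a2 t1 t2] by simp
  qed
  have cont: "continuous_on S F"
  proof -
    have "G z \<notin> \<real>\<^sub>\<le>\<^sub>0" if "z \<in> S" for z using Gb[OF that] complex_nonpos_Reals_iff[of "G z"] by simp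
    then show ?thesis unfolding F_def G_def using nz by (intro continuous_intros) auto
  qed
  have Sne: "S \<noteq> {}"
  proof -
    have "Complex (1 + 0.2/M) (6.1/M) \<in> S" unfolding Smem using M0 by (simp add: field_simps)
    then show ?thesis by blast
  qed
  obtain z where zS: "z \<in> S" and fz: "F z = z"
    using brouwer[of S F] Sne cont FS unfolding S_def by auto
  have "z^(k+3) = F z ^ (k+3)" using fz by simp
  also have "\<dots> = exp (of_nat (k+3) * ((Ln (G z) + 2 * of_real pi * \<i>) / of_nat (k+3)))"
    unfolding F_def by (rule exp_of_nat_mult[symmetric])
  also have "\<dots> = exp (Ln (G z) + 2 * of_real pi * \<i>)" using nz0 by simp
  also have "\<dots> = G z"
  proof -
    have "G z \<noteq> 0" using Gb[OF zS] by auto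
    then show ?thesis by (simp add: exp_add exp_Ln)
  qed
  finally have "z^(k+3) = of_nat (k+1) * z - of_nat k" unfolding G_def .
  moreover have "Re z > 1" using zS M0 unfolding Smem by (smt (verit) divide_pos_pos)
  ultimately show ?thesis by blast
qed


theorem mainTheorem5:
  fixes k :: nat
  assumes "k > 20"
  shows "\<exists>z. eigenvalue (B_mat k) z \<and> Re z < 0"
proof -
  obtain z where z: "z^(k+3) = of_nat (k+1) * z - of_nat k" "Re z > 1"
    using root_exists[of k] assms by auto
  have z0: "z \<noteq> 0" using z(2) by auto
  have "eigenvalue (B_mat k) (1 - z)" using eigen[of k z] assms z(1) z0 by simp
  moreover have "Re (1 - z) < 0" using z(2) by simp
  ultimately show ?thesis by blast
qed

end
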